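(* Let $\mathcal D\subset\mathbb{R}^d$ be a linear subspace with orthonormal basis given by the columns of $\mathbf V$, so that $\mathbf P=\mathbf V\mathbf V^T$ is the orthogonal projection onto $\mathcal D$. Let $\boldsymbol\theta\in\mathbb{R}^{d\times d}$ be invertible and let $\hat{\mathbf P}$ be the orthogonal projection onto $\boldsymbol\theta\mathcal D=\{\boldsymbol\theta\mathbf x:\mathbf x\in\mathcal D\}$. Then $$\|\boldsymbol\theta^{-1}\hat{\mathbf P}\boldsymbol\theta-\mathbf P\|_2\le\big(1+\kappa(\boldsymbol\theta)^2\big)\,\|\mathbf I-\boldsymbol\theta^T\boldsymbol\theta\|_2.$$
   Context: $\|\cdot\|_2$ denotes the spectral (operator 2-) norm and $\kappa(\boldsymbol\theta)=\|\boldsymbol\theta\|_2\|\boldsymbol\theta^{-1}\|_2$ the condition number. *)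

theory Defs
  imports "HOL-Analysis.Analysis"
begin

definition spec_norm :: "real^'n^'m \<Rightarrow> real" where
  "spec_norm A = onorm (\<lambda>x. A *v x)"

definition cond_num :: "real^'n^'n \<Rightarrow> real" where
  "cond_num A = spec_norm A * spec_norm (matrix_inv A)"

definition is_orth_proj :: "real^'n^'n \<Rightarrow> (real^'n) set \<Rightarrow> bool" where
  "is_orth_proj P S \<longleftrightarrow> (\<forall>x. P *v x \<in> S \<and> (\<forall>y\<in>S. orthogonal (x - P *v x) y))"

end

theory Submission
  imports Defs
begin

lemma col_dot: "(transpose V *v z) $ j = column j V \<bullet> (z::real^'n)"
  by (simp add: matrix_vector_mul_component transpose_def column_def inner_vec_def inner_commute)

lemma P_facts:
  fixes V :: "real^'k^'n"
  assumes orth: "\<And>i j. column i V \<bullet> column j V = (if i = j then 1 else 0)"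
  shows "(V ** transpose V) *v x \<in> span (columns V)"
    and "\<And>y. y \<in> span (columns V) \<Longrightarrow> orthogonal (x - (V ** transpose V) *v x) y"
proof -
  have VtV: "transpose V ** V = mat 1"
    by (simp add: matrix_mult_transpose_dot_column orth vec_eq_iff mat_def)
  have eq: "V *v z = (\<Sum>i\<in>UNIV. (z$i) *s column i V)" for z :: "real^'k"
    by (simp add: matrix_vector_column) (simp add: transpose_def column_def)
  show "(V ** transpose V) *v x \<in> span (columns V)"
    unfolding matrix_vector_mul_assoc[symmetric] eq
    by (simp add: scalar_mult_eq_scaleR) (intro span_sum span_mul span_base, auto simp: columns_def)
  have a: "transpose V *v ((V ** transpose V) *v x) = (transpose V ** V) *v (transpose V *v x)"
    by (simp only: matrix_vector_mul_assoc matrix_mul_assoc)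
  have z: "transpose V *v (x - (V ** transpose V) *v x) = 0"
    by (simp only: matrix_vector_mult_diff_distrib a VtV matrix_vector_mul_lid diff_self)
  fix y assume y: "y \<in> span (columns V)"
  show "orthogonal (x - (V ** transpose V) *v x) y"
  proof (rule orthogonal_to_span[OF y])
    fix c assume "c \<in> columns V"
    then obtain j where c: "c = column j V" by (auto simp: columns_def)
    show "orthogonal (x - (V ** transpose V) *v x) c"
      using arg_cong[OF z, of "\<lambda>v. v $ j"] unfolding col_dot c
      by (simp add: orthogonal_def inner_commute)
  qed
qed

lemma sn: "norm (A *v x) \<le> spec_norm A * norm (x::real^'n)"
  for A :: "real^'n^'m"
  unfolding spec_norm_def
  by (rule onorm) (simp add: linear_conv_bounded_linear)

lemma sn_nonneg: "0 \<le> spec_norm (A::real^'n^'m)"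
  unfolding spec_norm_def
  by (rule onorm_pos_le) (simp add: linear_conv_bounded_linear)

lemma sn_le: "(\<And>x. norm (A *v x) \<le> b * norm x) \<Longrightarrow> spec_norm (A::real^'n^'m) \<le> b"
  unfolding spec_norm_def by (rule onorm_le) auto

lemma dot_tt: "(\<theta> *v a) \<bullet> (\<theta> *v b) = a \<bullet> ((transpose \<theta> ** \<theta>) *v b)"
  for \<theta> :: "real^'n^'m"
proof -
  have "a \<bullet> ((transpose \<theta> ** \<theta>) *v b) = a \<bullet> (transpose \<theta> *v (\<theta> *v b))"
    by (simp only: matrix_vector_mul_assoc)
  also have "\<dots> = ((\<theta> *v b) v* \<theta>) \<bullet> a" by (simp add: inner_commute)
  also have "\<dots> = (\<theta> *v b) \<bullet> (\<theta> *v a)" by (rule dot_lmul_matrix)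
  finally show ?thesis by (simp add: inner_commute)
qed

theorem mainTheorem6:
  fixes D :: "(real^'n) set" and V :: "real^'k^'n" and P Phat \<theta> :: "real^'n^'n"
  assumes "subspace D"
    and "\<And>i j. column i V \<bullet> column j V = (if i = j then 1 else 0)"
    and "span (columns V) = D"
    and "P = V ** transpose V"
    and "invertible \<theta>"
    and "is_orth_proj Phat ((\<lambda>x. \<theta> *v x) ` D)"
  shows "spec_norm (matrix_inv \<theta> ** Phat ** \<theta> - P)
           \<le> (1 + (cond_num \<theta>)\<^sup>2) * spec_norm (mat 1 - transpose \<theta> ** \<theta>)"
proof -
  define Ti where "Ti = matrix_inv \<theta>"
  define E where "E = mat 1 - transpose \<theta> ** \<theta>"
  define TD where "TD = (\<lambda>x. \<theta> *v x) ` D"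
  have inv: "\<theta> ** Ti = mat 1" "Ti ** \<theta> = mat 1"
    using assms(5) unfolding Ti_def matrix_inv_def invertible_def
    by (metis (mono_tags, lifting) someI_ex)+
  have Tiv: "Ti *v (\<theta> *v z) = z" "\<theta> *v (Ti *v z) = z" for z
    by (simp_all add: matrix_vector_mul_assoc inv)
  have Pp: "P *v x \<in> D" "\<And>y. y \<in> D \<Longrightarrow> orthogonal (x - P *v x) y" for x
    using P_facts[OF assms(2)] assms(3,4) by auto
  have Ph: "Phat *v y \<in> TD" "\<And>z. z \<in> TD \<Longrightarrow> orthogonal (y - Phat *v y) z" for y
    using assms(6) unfolding is_orth_proj_def TD_def by auto
  have subTD: "subspace TD" unfolding TD_def
    by (rule linear_subspace_image[OF _ assms(1)]) simp
  have Phfix: "Phat *v y = y" if "y \<in> TD" for y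
  proof -
    have "y - Phat *v y \<in> TD" using subTD that Ph(1) by (simp add: subspace_diff)
    then have "orthogonal (y - Phat *v y) (y - Phat *v y)" using Ph(2) by blast
    then show ?thesis by (simp add: orthogonal_def)
  qed
  have Phn: "norm (Phat *v y) \<le> norm y" for y
  proof -
    have "orthogonal (y - Phat *v y) (Phat *v y)" using Ph by blast
    then have "(norm y)\<^sup>2 = (norm (y - Phat *v y))\<^sup>2 + (norm (Phat *v y))\<^sup>2"
      using norm_add_Pythagorean by fastforce
    then have "(norm (Phat *v y))\<^sup>2 \<le> (norm y)\<^sup>2" by simp
    then show ?thesis by (simp add: power2_le_iff_abs_le)
  qed
  define r where "r = spec_norm Ti"
  define s where "s = spec_norm \<theta>"
  define e where "e = spec_norm E"
  define k where "k = s * r"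
  have k: "cond_num \<theta> = k" unfolding k_def s_def r_def cond_num_def Ti_def by simp
  have r0: "r \<ge> 0" and s0: "s \<ge> 0" and e0: "e \<ge> 0"
    unfolding r_def s_def e_def by (simp_all add: sn_nonneg)
  have k1: "k \<ge> 1"
  proof -
    obtain v :: "real^'n" where v: "v \<noteq> 0"
    proof
      show "vec 1 \<noteq> (0::real^'n)" by (simp add: vec_eq_iff)
    qed
    have "norm v = norm (Ti *v (\<theta> *v v))" by (simp add: Tiv)
    also have "\<dots> \<le> r * norm (\<theta> *v v)" unfolding r_def by (rule sn)
    also have "\<dots> \<le> r * (s * norm v)" unfolding s_def by (rule mult_left_mono[OF sn r0])
    finally have "1 * norm v \<le> k * norm v" unfolding k_def by (simp add: ac_simps)
    then show ?thesis using v by simp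
  qed
  have main: "norm ((Ti ** Phat ** \<theta> - P) *v x) \<le> ((1 + k\<^sup>2) * e) * norm x" for x
  proof -
    define p where "p = P *v x"
    define w where "w = x - p"
    define q where "q = Ti *v (Phat *v (\<theta> *v x))"
    define u where "u = q - p"
    have ueq: "(Ti ** Phat ** \<theta> - P) *v x = u"
      unfolding u_def q_def p_def
      by (simp add: matrix_vector_mult_diff_rdistrib matrix_vector_mul_assoc[symmetric])
    have pD: "p \<in> D" unfolding p_def by (rule Pp)
    have qD: "q \<in> D"
    proof -
      obtain d where d: "d \<in> D" "Phat *v (\<theta> *v x) = \<theta> *v d"
        using Ph(1)[of "\<theta> *v x"] unfolding TD_def by auto
      show ?thesis unfolding q_def d(2) Tiv using d(1) .
    qed
    have uD: "u \<in> D" unfolding u_def using pD qD assms(1) by (simp add: subspace_diff)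
    have wu: "w \<bullet> u = 0" using Pp(2)[OF uD] unfolding w_def p_def orthogonal_def .
    have wp: "orthogonal w p" using Pp(2)[OF pD] unfolding w_def p_def .
    have wx: "norm w \<le> norm x"
    proof -
      have "(norm x)\<^sup>2 = (norm w)\<^sup>2 + (norm p)\<^sup>2"
        using norm_add_Pythagorean[OF wp] unfolding w_def by simp
      then have "(norm w)\<^sup>2 \<le> (norm x)\<^sup>2" by simp
      then show ?thesis by (simp add: power2_le_iff_abs_le)
    qed
    have thp: "Phat *v (\<theta> *v p) = \<theta> *v p" using pD by (intro Phfix) (auto simp: TD_def)
    have uw: "u = Ti *v (Phat *v (\<theta> *v w))"
      unfolding u_def q_def w_def
      by (simp add: matrix_vector_mult_diff_distrib thp Tiv)
    have ub1: "norm u \<le> k * norm x"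
    proof -
      have "norm u \<le> r * norm (Phat *v (\<theta> *v w))" unfolding uw r_def by (rule sn)
      also have "\<dots> \<le> r * norm (\<theta> *v w)" by (rule mult_left_mono[OF Phn r0])
      also have "\<dots> \<le> r * (s * norm w)" unfolding s_def by (rule mult_left_mono[OF sn r0])
      also have "\<dots> \<le> r * (s * norm x)" using wx r0 s0 by (simp add: mult_left_mono)
      finally show ?thesis unfolding k_def by (simp add: ac_simps)
    qed
    have thu: "\<theta> *v u \<in> TD" using uD by (auto simp: TD_def)
    have orth1: "(\<theta> *v w - \<theta> *v u) \<bullet> (\<theta> *v u) = 0"
    proof -
      have "\<theta> *v w - \<theta> *v u = \<theta> *v x - Phat *v (\<theta> *v x)"
        unfolding w_def u_def q_def by (simp add: matrix_vector_mult_diff_distrib Tiv)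
      then show ?thesis using Ph(2)[OF thu] by (simp add: orthogonal_def)
    qed
    have Eu: "E *v u = u - (transpose \<theta> ** \<theta>) *v u"
      unfolding E_def by (simp add: matrix_vector_mult_diff_rdistrib)
    have A: "(\<theta> *v u) \<bullet> (\<theta> *v u) = - (w \<bullet> (E *v u))"
    proof -
      have "(\<theta> *v u) \<bullet> (\<theta> *v u) = (\<theta> *v w) \<bullet> (\<theta> *v u)"
        using orth1 by (simp add: inner_diff_left)
      also have "\<dots> = w \<bullet> ((transpose \<theta> ** \<theta>) *v u)" by (rule dot_tt)
      also have "\<dots> = - (w \<bullet> (E *v u))" using wu by (simp add: Eu inner_diff_right)
      finally show ?thesis .
    qed
    have B: "u \<bullet> u = u \<bullet> (E *v u) + (\<theta> *v u) \<bullet> (\<theta> *v u)"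
      by (simp add: Eu dot_tt inner_diff_right)
    have C: "u \<bullet> u = u \<bullet> (E *v u) - w \<bullet> (E *v u)" using A B by simp
    have c1: "u \<bullet> (E *v u) \<le> norm u * (e * norm u)"
      using norm_cauchy_schwarz[of u "E *v u"] mult_left_mono[OF sn[of E u] norm_ge_zero[of u]]
      unfolding e_def by linarith
    have c2: "- (w \<bullet> (E *v u)) \<le> norm w * (e * norm u)"
      using Cauchy_Schwarz_ineq2[of w "E *v u"] mult_left_mono[OF sn[of E u] norm_ge_zero[of w]]
      unfolding e_def by linarith
    have D: "(norm u)\<^sup>2 \<le> e * (norm u)\<^sup>2 + e * norm w * norm u"
    proof -
      have "(norm u)\<^sup>2 = u \<bullet> u" by (simp add: power2_norm_eq_inner)
      then show ?thesis using C c1 c2 by (simp add: power2_eq_square algebra_simps)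
    qed
    show ?thesis
    proof (cases "e < 1/2")
      case True
      have "norm u \<le> 2 * e * norm x"
      proof (cases "u = 0")
        case False
        then have nu: "norm u > 0" by simp
        have "norm u * norm u \<le> (e * norm u + e * norm w) * norm u"
          using D by (simp add: power2_eq_square algebra_simps)
        then have "norm u \<le> e * norm u + e * norm w" using nu by simp
        then have "(1 - e) * norm u \<le> e * norm w" by (simp add: algebra_simps)
        moreover have "e * norm w \<le> e * norm x" using wx e0 by (simp add: mult_left_mono)
        moreover have "(1/2) * norm u \<le> (1 - e) * norm u" using True by (intro mult_right_mono) auto
        ultimately show ?thesis by simp
      qed (simp add: e0)
      moreover have "2 * e * norm x \<le> (1 + k\<^sup>2) * e * norm x"
      proof -
        have "2 \<le> 1 + k\<^sup>2" using k1 by (simp add: one_le_power)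
        then show ?thesis using e0 by (simp add: mult_right_mono)
      qed
      ultimately show ?thesis using ueq by simp
    next
      case False
      have "0 \<le> (k - 1)\<^sup>2" by simp
      then have "k \<le> (1 + k\<^sup>2) * (1/2)" by (simp add: power2_eq_square algebra_simps)
      also have "\<dots> \<le> (1 + k\<^sup>2) * e" using False
        by (intro mult_left_mono) (auto intro: add_nonneg_nonneg)
      finally have "k * norm x \<le> (1 + k\<^sup>2) * e * norm x" by (simp add: mult_right_mono)
      then show ?thesis using ub1 ueq by simp
    qed
  qed
  show ?thesis
    unfolding k Ti_def[symmetric] E_def[symmetric] e_def[symmetric]
    by (rule sn_le) (rule main)
qed
end
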